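(* Let $\{R_\alpha\}$ be a collection of rings. Then the direct product $R=\prod_\alpha R_\alpha$ is weakly $r$-clean if and only if each $R_\alpha$ is weakly $r$-clean and at most one $R_\alpha$ is not $r$-clean.
   Context: Rings are associative with identity. $Idem(R)$ denotes the idempotents and $Reg(R)=\{r\in R: r=ryr \text{ for some } y\in R\}$ the regular elements of $R$. A ring is $r$-clean if every element is of the form $r+e$ with $r\in Reg(R)$, $e\in Idem(R)$. An element $x$ is weakly $r$-clean if $x=r+e$ or $x=r-e$ for some $r\in Reg(R)$, $e\in Idem(R)$; a ring is weakly $r$-clean if all its elements are. *)

theory Defs
  imports "HOL-Algebra.Ring"
begin

definition product_ring :: "'i set \<Rightarrow> ('i \<Rightarrow> ('a, 'c) ring_scheme) \<Rightarrow> ('i \<Rightarrow> 'a) ring"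
  where "product_ring I R \<equiv>
    \<lparr>carrier = (\<Pi>\<^sub>E i\<in>I. carrier (R i)),
     monoid.mult = (\<lambda>x y. (\<lambda>i\<in>I. x i \<otimes>\<^bsub>R i\<^esub> y i)),
     one = (\<lambda>i\<in>I. \<one>\<^bsub>R i\<^esub>),
     zero = (\<lambda>i\<in>I. \<zero>\<^bsub>R i\<^esub>),
     add = (\<lambda>x y. (\<lambda>i\<in>I. x i \<oplus>\<^bsub>R i\<^esub> y i))\<rparr>"

definition Idem_elems :: "('a, 'c) ring_scheme \<Rightarrow> 'a set"
  where "Idem_elems R = {e \<in> carrier R. mult R e e = e}"

definition Reg_elems :: "('a, 'c) ring_scheme \<Rightarrow> 'a set"
  where "Reg_elems R = {r \<in> carrier R. \<exists>y \<in> carrier R. r = mult R (mult R r y) r}"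

definition r_clean :: "('a, 'c) ring_scheme \<Rightarrow> bool"
  where "r_clean R \<longleftrightarrow> (\<forall>x \<in> carrier R. \<exists>r \<in> Reg_elems R. \<exists>e \<in> Idem_elems R. x = add R r e)"

definition weakly_r_clean_elem :: "('a, 'c) ring_scheme \<Rightarrow> 'a \<Rightarrow> bool"
  where "weakly_r_clean_elem R x \<longleftrightarrow>
    (\<exists>r \<in> Reg_elems R. \<exists>e \<in> Idem_elems R. x = add R r e \<or> x = a_minus R r e)"

definition weakly_r_clean :: "('a, 'c) ring_scheme \<Rightarrow> bool"
  where "weakly_r_clean R \<longleftrightarrow> (\<forall>x \<in> carrier R. weakly_r_clean_elem R x)"

end

theory Submission
  imports Defs
begin

lemma P_simps:
  "carrier (product_ring I R) = (\<Pi>\<^sub>E i\<in>I. carrier (R i))"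
  "mult (product_ring I R) x y = (\<lambda>i\<in>I. x i \<otimes>\<^bsub>R i\<^esub> y i)"
  "add (product_ring I R) x y = (\<lambda>i\<in>I. x i \<oplus>\<^bsub>R i\<^esub> y i)"
  "zero (product_ring I R) = (\<lambda>i\<in>I. \<zero>\<^bsub>R i\<^esub>)"
  "one (product_ring I R) = (\<lambda>i\<in>I. \<one>\<^bsub>R i\<^esub>)"
  by (simp_all add: product_ring_def)

lemma P_inv:
  assumes rings: "\<And>i. i \<in> I \<Longrightarrow> ring (R i)"
    and x: "x \<in> carrier (product_ring I R)"
  shows "a_inv (product_ring I R) x = (\<lambda>i\<in>I. \<ominus>\<^bsub>R i\<^esub> x i)"
proof -
  let ?P = "product_ring I R"
  let ?v = "(\<lambda>i\<in>I. \<ominus>\<^bsub>R i\<^esub> x i)"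
  have xi: "\<And>i. i \<in> I \<Longrightarrow> x i \<in> carrier (R i)" using x by (auto simp: P_simps)
  have H1: "?v \<in> carrier ?P \<and> add ?P x ?v = zero ?P \<and> add ?P ?v x = zero ?P"
      using xi rings by (auto simp: P_simps intro!: restrict_ext
          abelian_group.a_inv_closed ring.is_abelian_group abelian_group.r_neg abelian_group.l_neg)
  have H2: "y = ?v" if y: "y \<in> carrier ?P \<and> add ?P x y = zero ?P \<and> add ?P y x = zero ?P" for y
    proof (rule extensionalityI[where A=I])
      show "y \<in> extensional I" using y by (auto simp: P_simps PiE_def)
      show "?v \<in> extensional I" by simp
      fix i assume i: "i \<in> I"
      have "y i \<oplus>\<^bsub>R i\<^esub> x i = \<zero>\<^bsub>R i\<^esub>"
        using y i by (auto simp: P_simps dest!: fun_cong[where x=i])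
      moreover have "y i \<in> carrier (R i)" using y i by (auto simp: P_simps)
      ultimately show "y i = ?v i"
        using i xi[OF i] rings[OF i]
        by (simp add: abelian_group.minus_equality ring.is_abelian_group)
    qed
  show ?thesis
    unfolding a_inv_def[of "product_ring I R"] m_inv_def[of "add_monoid (product_ring I R)"]
    apply (rule the_equality)
    using H1 apply simp
    using H2 apply simp
    done
qed

lemma P_minus:
  assumes rings: "\<And>i. i \<in> I \<Longrightarrow> ring (R i)"
    and e: "e \<in> carrier (product_ring I R)"
  shows "a_minus (product_ring I R) r e = (\<lambda>i\<in>I. r i \<ominus>\<^bsub>R i\<^esub> e i)"
  using P_inv[OF rings e] by (auto simp: a_minus_def P_simps)

lemma reg_neg:
  fixes R :: "('a, 'b) ring_scheme" (structure)
  assumes "ring R" "r \<in> Reg_elems R" shows "\<ominus>\<^bsub>R\<^esub> r \<in> Reg_elems R"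
proof -
  interpret ring R by fact
  obtain y where y: "y \<in> carrier R" "r \<in> carrier R" "r = r \<otimes> y \<otimes> r"
    using assms(2) by (auto simp: Reg_elems_def)
  have "(\<ominus> r) \<otimes> (\<ominus> y) \<otimes> (\<ominus> r) = \<ominus> (r \<otimes> y \<otimes> r)"
    using y by (simp add: l_minus r_minus)
  then show ?thesis using y by (auto simp: Reg_elems_def intro!: bexI[of _ "\<ominus> y"])
qed

lemma neg_swap1:
  fixes R :: "('a, 'b) ring_scheme" (structure)
  assumes "ring R" "x \<in> carrier R" "r \<in> carrier R" "e \<in> carrier R"
    "\<ominus>\<^bsub>R\<^esub> x = r \<ominus>\<^bsub>R\<^esub> e"
  shows "x = (\<ominus>\<^bsub>R\<^esub> r) \<oplus>\<^bsub>R\<^esub> e"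
proof -
  interpret ring R by fact
  have "x = \<ominus> (\<ominus> x)" using assms(2) by simp
  also have "\<dots> = \<ominus> (r \<oplus> \<ominus> e)" using arg_cong[OF assms(5), of "a_inv R"] by (simp only: a_minus_def)
  also have "\<dots> = (\<ominus> r) \<oplus> e" using assms by (simp add: minus_add)
  finally show ?thesis .
qed

lemma neg_swap2:
  fixes R :: "('a, 'b) ring_scheme" (structure)
  assumes "ring R" "x \<in> carrier R" "r \<in> carrier R" "e \<in> carrier R"
    "\<ominus>\<^bsub>R\<^esub> x = r \<oplus>\<^bsub>R\<^esub> e"
  shows "x = (\<ominus>\<^bsub>R\<^esub> r) \<ominus>\<^bsub>R\<^esub> e"
proof -
  interpret ring R by fact
  have "x = \<ominus> (\<ominus> x)" using assms(2) by simp
  also have "\<dots> = \<ominus> (r \<oplus> e)" using arg_cong[OF assms(5), of "a_inv R"] by (simp only:)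
  also have "\<dots> = (\<ominus> r) \<ominus> e" using assms by (simp add: minus_add a_minus_def)
  finally show ?thesis .
qed

lemma comp_reg:
  "r \<in> Reg_elems (product_ring I R) \<Longrightarrow> i \<in> I \<Longrightarrow> r i \<in> Reg_elems (R i)"
  by (auto simp: Reg_elems_def P_simps dest!: fun_cong[where x=i])

lemma comp_idem:
  "e \<in> Idem_elems (product_ring I R) \<Longrightarrow> i \<in> I \<Longrightarrow> e i \<in> Idem_elems (R i)"
  by (auto simp: Idem_elems_def P_simps dest!: fun_cong[where x=i])

lemma lift_elems:
  assumes "\<forall>i\<in>I. fr i \<in> Reg_elems (R i) \<and> fe i \<in> Idem_elems (R i)"
  shows "restrict fr I \<in> Reg_elems (product_ring I R) \<and> restrict fe I \<in> Idem_elems (product_ring I R)"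
proof -
  have "\<forall>i\<in>I. \<exists>y\<in>carrier (R i). fr i = fr i \<otimes>\<^bsub>R i\<^esub> y \<otimes>\<^bsub>R i\<^esub> fr i"
    using assms by (auto simp: Reg_elems_def)
  then obtain fy where fy: "\<forall>i\<in>I. fy i \<in> carrier (R i) \<and> fr i = fr i \<otimes>\<^bsub>R i\<^esub> fy i \<otimes>\<^bsub>R i\<^esub> fr i"
    by metis
  have "restrict fr I = mult (product_ring I R) (mult (product_ring I R) (restrict fr I) (restrict fy I)) (restrict fr I)"
    using fy by (auto simp: P_simps intro!: restrict_ext)
  then show ?thesis using assms fy
    by (auto simp: Reg_elems_def Idem_elems_def P_simps intro!: bexI[of _ "restrict fy I"] restrict_ext)
qed

lemma ext_eq:
  assumes "x \<in> carrier (product_ring I R)" "\<forall>i\<in>I. x i = g i"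
  shows "x = restrict g I"
  using assms by (auto simp: P_simps PiE_def intro!: extensionalityI[where A=I])

lemma plus_lift:
  assumes x: "x \<in> carrier (product_ring I R)"
    and h: "\<forall>i\<in>I. \<exists>r\<in>Reg_elems (R i). \<exists>e\<in>Idem_elems (R i). x i = r \<oplus>\<^bsub>R i\<^esub> e"
  shows "weakly_r_clean_elem (product_ring I R) x"
proof -
  obtain fr where "\<forall>i\<in>I. fr i \<in> Reg_elems (R i) \<and> (\<exists>e\<in>Idem_elems (R i). x i = fr i \<oplus>\<^bsub>R i\<^esub> e)"
    using h by metis
  then obtain fe where f: "\<forall>i\<in>I. fr i \<in> Reg_elems (R i) \<and> fe i \<in> Idem_elems (R i) \<and> x i = fr i \<oplus>\<^bsub>R i\<^esub> fe i"
    by metis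
  have L: "restrict fr I \<in> Reg_elems (product_ring I R) \<and> restrict fe I \<in> Idem_elems (product_ring I R)"
    using f by (intro lift_elems) auto
  have "x = add (product_ring I R) (restrict fr I) (restrict fe I)"
    unfolding P_simps using ext_eq[OF x] f by auto
  then show ?thesis using L unfolding weakly_r_clean_elem_def by blast
qed

lemma minus_lift:
  assumes rings: "\<And>i. i \<in> I \<Longrightarrow> ring (R i)"
    and x: "x \<in> carrier (product_ring I R)"
    and h: "\<forall>i\<in>I. \<exists>r\<in>Reg_elems (R i). \<exists>e\<in>Idem_elems (R i). x i = r \<ominus>\<^bsub>R i\<^esub> e"
  shows "weakly_r_clean_elem (product_ring I R) x"
proof -
  obtain fr where "\<forall>i\<in>I. fr i \<in> Reg_elems (R i) \<and> (\<exists>e\<in>Idem_elems (R i). x i = fr i \<ominus>\<^bsub>R i\<^esub> e)"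
    using h by metis
  then obtain fe where f: "\<forall>i\<in>I. fr i \<in> Reg_elems (R i) \<and> fe i \<in> Idem_elems (R i) \<and> x i = fr i \<ominus>\<^bsub>R i\<^esub> fe i"
    by metis
  have L: "restrict fr I \<in> Reg_elems (product_ring I R) \<and> restrict fe I \<in> Idem_elems (product_ring I R)"
    using f by (intro lift_elems) auto
  have ec: "restrict fe I \<in> carrier (product_ring I R)" using L by (simp add: Idem_elems_def)
  have "x = (\<lambda>i\<in>I. fr i \<ominus>\<^bsub>R i\<^esub> fe i)"
    using ext_eq[OF x] f by auto
  also have "\<dots> = a_minus (product_ring I R) (restrict fr I) (restrict fe I)"
    using P_minus[OF rings ec, of "restrict fr I"] by (auto intro!: restrict_ext)
  finally have "x = a_minus (product_ring I R) (restrict fr I) (restrict fe I)" .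
  then show ?thesis using L unfolding weakly_r_clean_elem_def by blast
qed

theorem theorem2p3:
  fixes I :: "'i set" and R :: "'i \<Rightarrow> ('a, 'c) ring_scheme"
  assumes "\<And>i. i \<in> I \<Longrightarrow> ring (R i)"
  shows "weakly_r_clean (product_ring I R) \<longleftrightarrow>
           ((\<forall>i \<in> I. weakly_r_clean (R i)) \<and>
            (\<forall>i \<in> I. \<forall>j \<in> I. \<not> r_clean (R i) \<and> \<not> r_clean (R j) \<longrightarrow> i = j))"
proof
  let ?P = "product_ring I R"
  note rings = assms
  assume W: "weakly_r_clean ?P"
  have dec: "\<exists>r e. r \<in> Reg_elems ?P \<and> e \<in> carrier ?P \<and> e \<in> Idem_elems ?P \<and>
       ((\<forall>i\<in>I. x i = r i \<oplus>\<^bsub>R i\<^esub> e i) \<or> (\<forall>i\<in>I. x i = r i \<ominus>\<^bsub>R i\<^esub> e i))"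
    if x: "x \<in> carrier ?P" for x
  proof -
    obtain r e where re: "r \<in> Reg_elems ?P" "e \<in> Idem_elems ?P"
      "x = add ?P r e \<or> x = a_minus ?P r e"
      using W x unfolding weakly_r_clean_def weakly_r_clean_elem_def by blast
    have ec: "e \<in> carrier ?P" using re(2) by (simp add: Idem_elems_def)
    have "(\<forall>i\<in>I. x i = r i \<oplus>\<^bsub>R i\<^esub> e i) \<or> (\<forall>i\<in>I. x i = r i \<ominus>\<^bsub>R i\<^esub> e i)"
      using re(3) P_minus[OF rings ec, of r] by (auto simp: P_simps)
    then show ?thesis using re ec by blast
  qed
  show "(\<forall>i \<in> I. weakly_r_clean (R i)) \<and>
        (\<forall>i \<in> I. \<forall>j \<in> I. \<not> r_clean (R i) \<and> \<not> r_clean (R j) \<longrightarrow> i = j)"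
  proof (intro conjI ballI impI)
    fix i assume i: "i \<in> I"
    show "weakly_r_clean (R i)" unfolding weakly_r_clean_def
    proof
      fix a assume a: "a \<in> carrier (R i)"
      let ?x = "\<lambda>j\<in>I. if j = i then a else \<zero>\<^bsub>R j\<^esub>"
      have "?x \<in> carrier ?P" using a rings by (auto simp: P_simps ring.ring_simprules(2))
      from dec[OF this] obtain r e where re: "r \<in> Reg_elems ?P" "e \<in> carrier ?P" "e \<in> Idem_elems ?P"
        "(\<forall>i\<in>I. ?x i = r i \<oplus>\<^bsub>R i\<^esub> e i) \<or> (\<forall>i\<in>I. ?x i = r i \<ominus>\<^bsub>R i\<^esub> e i)"
        by (elim exE conjE)
      have "r i \<in> Reg_elems (R i)" "e i \<in> Idem_elems (R i)"
        using comp_reg[OF re(1) i] comp_idem[OF re(3) i] by auto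
      moreover have "a = r i \<oplus>\<^bsub>R i\<^esub> e i \<or> a = r i \<ominus>\<^bsub>R i\<^esub> e i"
        using re(4) i by auto
      ultimately show "weakly_r_clean_elem (R i) a" unfolding weakly_r_clean_elem_def by blast
    qed
  next
    fix i j assume i: "i \<in> I" and j: "j \<in> I" and nc: "\<not> r_clean (R i) \<and> \<not> r_clean (R j)"
    show "i = j"
    proof (rule ccontr)
      assume ij: "i \<noteq> j"
      obtain a where a: "a \<in> carrier (R i)"
        "\<not> (\<exists>r\<in>Reg_elems (R i). \<exists>e\<in>Idem_elems (R i). a = r \<oplus>\<^bsub>R i\<^esub> e)"
        using nc unfolding r_clean_def by blast
      obtain b where b: "b \<in> carrier (R j)"
        "\<not> (\<exists>r\<in>Reg_elems (R j). \<exists>e\<in>Idem_elems (R j). b = r \<oplus>\<^bsub>R j\<^esub> e)"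
        using nc unfolding r_clean_def by blast
      let ?x = "\<lambda>k\<in>I. if k = i then a else if k = j then \<ominus>\<^bsub>R j\<^esub> b else \<zero>\<^bsub>R k\<^esub>"
      have "?x \<in> carrier ?P" using a b rings j
        by (auto simp: P_simps ring.ring_simprules(2) ring.ring_simprules(3))
      from dec[OF this] obtain r e where re: "r \<in> Reg_elems ?P" "e \<in> carrier ?P" "e \<in> Idem_elems ?P"
        "(\<forall>i\<in>I. ?x i = r i \<oplus>\<^bsub>R i\<^esub> e i) \<or> (\<forall>i\<in>I. ?x i = r i \<ominus>\<^bsub>R i\<^esub> e i)"
        by (elim exE conjE)
      have ri: "r i \<in> Reg_elems (R i)" "e i \<in> Idem_elems (R i)"
        using comp_reg[OF re(1) i] comp_idem[OF re(3) i] by auto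
      have rj: "r j \<in> Reg_elems (R j)" "e j \<in> Idem_elems (R j)"
        using comp_reg[OF re(1) j] comp_idem[OF re(3) j] by auto
      show False using re(4)
      proof
        assume "\<forall>k\<in>I. ?x k = r k \<oplus>\<^bsub>R k\<^esub> e k"
        then have "a = r i \<oplus>\<^bsub>R i\<^esub> e i" using i by auto
        then show False using a ri by blast
      next
        assume "\<forall>k\<in>I. ?x k = r k \<ominus>\<^bsub>R k\<^esub> e k"
        then have "\<ominus>\<^bsub>R j\<^esub> b = r j \<ominus>\<^bsub>R j\<^esub> e j" using j ij by auto
        then have "b = (\<ominus>\<^bsub>R j\<^esub> r j) \<oplus>\<^bsub>R j\<^esub> e j"
          using neg_swap1[OF rings[OF j] b(1)] rj by (auto simp: Reg_elems_def Idem_elems_def)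
        moreover have "\<ominus>\<^bsub>R j\<^esub> r j \<in> Reg_elems (R j)" using reg_neg[OF rings[OF j] rj(1)] .
        ultimately show False using b rj by blast
      qed
    qed
  qed
next
  let ?P = "product_ring I R"
  note rings = assms
  assume H: "(\<forall>i \<in> I. weakly_r_clean (R i)) \<and>
        (\<forall>i \<in> I. \<forall>j \<in> I. \<not> r_clean (R i) \<and> \<not> r_clean (R j) \<longrightarrow> i = j)"
  show "weakly_r_clean ?P" unfolding weakly_r_clean_def
  proof
    fix x assume x: "x \<in> carrier ?P"
    have xi: "\<And>i. i \<in> I \<Longrightarrow> x i \<in> carrier (R i)" using x by (auto simp: P_simps)
    show "weakly_r_clean_elem ?P x"
    proof (cases "\<forall>i\<in>I. r_clean (R i)")
      case True
      then show ?thesis using xi by (intro plus_lift[OF x]) (auto simp: r_clean_def)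
    next
      case False
      then obtain k where k: "k \<in> I" "\<not> r_clean (R k)" by blast
      have oth: "r_clean (R i)" if "i \<in> I" "i \<noteq> k" for i using H k that by blast
      obtain r e where re: "r \<in> Reg_elems (R k)" "e \<in> Idem_elems (R k)"
        "x k = r \<oplus>\<^bsub>R k\<^esub> e \<or> x k = r \<ominus>\<^bsub>R k\<^esub> e"
        using H k xi[OF k(1)] unfolding weakly_r_clean_def weakly_r_clean_elem_def by blast
      from re(3) show ?thesis
      proof
        assume "x k = r \<oplus>\<^bsub>R k\<^esub> e"
        then show ?thesis using re xi oth
          by (intro plus_lift[OF x]) (metis r_clean_def)
      next
        assume xk: "x k = r \<ominus>\<^bsub>R k\<^esub> e"
        have "\<forall>i\<in>I. \<exists>r\<in>Reg_elems (R i). \<exists>e\<in>Idem_elems (R i). x i = r \<ominus>\<^bsub>R i\<^esub> e"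
        proof
          fix i assume i: "i \<in> I"
          show "\<exists>r\<in>Reg_elems (R i). \<exists>e\<in>Idem_elems (R i). x i = r \<ominus>\<^bsub>R i\<^esub> e"
          proof (cases "i = k")
            case True then show ?thesis using xk re by blast
          next
            case False
            have nc: "\<ominus>\<^bsub>R i\<^esub> x i \<in> carrier (R i)"
              using xi[OF i] rings[OF i] by (simp add: ring.ring_simprules(3))
            obtain r' e' where r'e': "r' \<in> Reg_elems (R i)" "e' \<in> Idem_elems (R i)"
              "\<ominus>\<^bsub>R i\<^esub> x i = r' \<oplus>\<^bsub>R i\<^esub> e'"
              using oth[OF i False] nc unfolding r_clean_def by blast
            have "x i = (\<ominus>\<^bsub>R i\<^esub> r') \<ominus>\<^bsub>R i\<^esub> e'"
              using neg_swap2[OF rings[OF i] xi[OF i] _ _ r'e'(3)] r'e'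
              by (auto simp: Reg_elems_def Idem_elems_def)
            then show ?thesis using reg_neg[OF rings[OF i] r'e'(1)] r'e'(2) by blast
          qed
        qed
        then show ?thesis using minus_lift[of I R x] assms x by blast
      qed
    qed
  qed
qed

end
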